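(* The Steiner–Plücker configuration is isomorphic to the incidence structure $\mathcal S$ whose points are the 20 four-element subsets of $\{0,1,\dots,6\}$ containing $0$, whose lines are the 15 three-element subsets of $\{0,1,\dots,6\}$ containing $0$, and in which a point is incident with a line iff the line's subset is contained in the point's subset. (Geometrically: these are the intersection points of the quadruples and the intersection lines of the triples, each containing $H_0$, of seven hyperplanes $H_0,\dots,H_6$ in general position in projective 4-space, which after a suitable projection to the plane form the Steiner–Plücker configuration.)
   Context: Steiner–Plücker configuration $(20_3,15_4)$: consider three triangles $A_iB_iC_i$ ($i=1,2,3$) in the projective plane, perspective from a common point $O$ (so $O,A_1,A_2,A_3$ are collinear, likewise for the $B$'s and the $C$'s). For each pair $i<j$, corresponding sides meet in three points $A_iB_i\cap A_jB_j$, $B_iC_i\cap B_jC_j$, $C_iA_i\cap C_jA_j$, which lie on the axis of perspectivity $a_{ij}$; the three axes $a_{12},a_{13},a_{23}$ pass through a common point $Z$. Combinatorially, the configuration has the 20 points $O$, the 9 vertices, the 9 side-intersection points and $Z$, and the 15 lines: the 3 lines through $O$ and corresponding vertices, the 9 sides, and the 3 axes, with the incidences just described (each line contains 4 of the points, each point lies on 3 of the lines). *)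

theory Defs
  imports Main
begin

text \<open>Combinatorial Steiner--Pluecker configuration (20_3, 15_4).
  Three triangles A_i B_i C_i (i = 1,2,3), perspective from O.\<close>

datatype idx = I1 | I2 | I3
datatype vtx = VA | VB | VC
datatype side = SAB | SBC | SCA

fun endpoints :: "side \<Rightarrow> vtx set" where
  "endpoints SAB = {VA, VB}"
| "endpoints SBC = {VB, VC}"
| "endpoints SCA = {VC, VA}"

text \<open>Points: O; vertices V v i; side-intersection points X s {i,j}
  (the intersection of side s of triangle i with side s of triangle j); Z.\<close>
datatype sp_point = PtO | V vtx idx | X side "idx set" | PtZ

text \<open>Lines: line through O and the three vertices labelled v; side s of
  triangle i; axis of perspectivity a_{ij} of triangles i and j.\<close>
datatype sp_line = Through vtx | SideL side idx | Axis "idx set"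

definition sp_points :: "sp_point set" where
  "sp_points = {PtO} \<union> {V v i | v i. True} \<union> {X s p | s p. card p = 2} \<union> {PtZ}"

definition sp_lines :: "sp_line set" where
  "sp_lines = {Through v | v. True} \<union> {SideL s i | s i. True} \<union> {Axis p | p. card p = 2}"

fun sp_inc :: "sp_point \<Rightarrow> sp_line \<Rightarrow> bool" where
  "sp_inc PtO (Through v) = True"
| "sp_inc (V v i) (Through w) = (v = w)"
| "sp_inc (V v i) (SideL s j) = (i = j \<and> v \<in> endpoints s)"
| "sp_inc (X s p) (SideL t j) = (s = t \<and> j \<in> p)"
| "sp_inc (X s p) (Axis q) = (p = q)"
| "sp_inc PtZ (Axis q) = True"
| "sp_inc _ _ = False"

definition S_points :: "nat set set" where
  "S_points = {P. P \<subseteq> {0..6} \<and> card P = 4 \<and> 0 \<in> P}"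

definition S_lines :: "nat set set" where
  "S_lines = {L. L \<subseteq> {0..6} \<and> card L = 3 \<and> 0 \<in> L}"

definition S_inc :: "nat set \<Rightarrow> nat set \<Rightarrow> bool" where
  "S_inc P L \<longleftrightarrow> L \<subseteq> P"

definition inc_isomorphic ::
  "'p set \<Rightarrow> 'l set \<Rightarrow> ('p \<Rightarrow> 'l \<Rightarrow> bool) \<Rightarrow>
   'q set \<Rightarrow> 'm set \<Rightarrow> ('q \<Rightarrow> 'm \<Rightarrow> bool) \<Rightarrow> bool" where
  "inc_isomorphic P L I P' L' I' \<longleftrightarrow>
     (\<exists>f g. bij_betw f P P' \<and> bij_betw g L L' \<and>
            (\<forall>p\<in>P. \<forall>l\<in>L. I p l \<longleftrightarrow> I' (f p) (g l)))"

end

theory Submission imports Defs begin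
lemma idx_UNIV: "(UNIV::idx set) = {I1,I2,I3}" using idx.exhaust by auto
lemma vtx_UNIV: "(UNIV::vtx set) = {VA,VB,VC}" using vtx.exhaust by auto
lemma side_UNIV: "(UNIV::side set) = {SAB,SBC,SCA}" using side.exhaust by auto
lemma card2: "card (p::idx set) = 2 \<longleftrightarrow> p \<in> {{I1,I2},{I1,I3},{I2,I3}}"
proof -
  have "p \<in> Pow {I1,I2,I3}" using idx_UNIV by auto
  hence "p \<in> {{},{I1},{I2},{I3},{I1,I2},{I1,I3},{I2,I3},{I1,I2,I3}}"
    by (simp add: Pow_insert) blast
  thus ?thesis by auto
qed

lemma SP: "S_points = {{0,1,2,3},{0,1,2,4},{0,1,2,5},{0,1,2,6},{0,1,3,4},{0,1,3,5},{0,1,3,6},{0,1,4,5},{0,1,4,6},{0,1,5,6},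
 {0,2,3,4},{0,2,3,5},{0,2,3,6},{0,2,4,5},{0,2,4,6},{0,2,5,6},{0,3,4,5},{0,3,4,6},{0,3,5,6},{0,4,5,6}}"
proof -
  have "S_points = Set.filter (\<lambda>P. card P = 4 \<and> 0 \<in> P) (Pow (set [0..<7]))"
    unfolding S_points_def by auto
  also have "\<dots> = {{0,1,2,3},{0,1,2,4},{0,1,2,5},{0,1,2,6},{0,1,3,4},{0,1,3,5},{0,1,3,6},{0,1,4,5},{0,1,4,6},{0,1,5,6},
 {0,2,3,4},{0,2,3,5},{0,2,3,6},{0,2,4,5},{0,2,4,6},{0,2,5,6},{0,3,4,5},{0,3,4,6},{0,3,5,6},{0,4,5,6}}" by code_simp
  finally show ?thesis .
qed

lemma SL: "S_lines = {{0,1,2},{0,1,3},{0,1,4},{0,1,5},{0,1,6},{0,2,3},{0,2,4},{0,2,5},{0,2,6},{0,3,4},{0,3,5},{0,3,6},{0,4,5},{0,4,6},{0,5,6}}"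
proof -
  have "S_lines = Set.filter (\<lambda>P. card P = 3 \<and> 0 \<in> P) (Pow (set [0..<7]))"
    unfolding S_lines_def by auto
  also have "\<dots> = {{0,1,2},{0,1,3},{0,1,4},{0,1,5},{0,1,6},{0,2,3},{0,2,4},{0,2,5},{0,2,6},{0,3,4},{0,3,5},{0,3,6},{0,4,5},{0,4,6},{0,5,6}}" by code_simp
  finally show ?thesis .
qed

definition "Plist = [PtO, V VA I1, V VA I2, V VA I3, V VB I1, V VB I2, V VB I3, V VC I1, V VC I2, V VC I3,
  X SAB {I1,I2}, X SAB {I1,I3}, X SAB {I2,I3}, X SBC {I1,I2}, X SBC {I1,I3}, X SBC {I2,I3},
  X SCA {I1,I2}, X SCA {I1,I3}, X SCA {I2,I3}, PtZ]"
definition "Llist = [Through VA, Through VB, Through VC, SideL SAB I1, SideL SAB I2, SideL SAB I3,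
  SideL SBC I1, SideL SBC I2, SideL SBC I3, SideL SCA I1, SideL SCA I2, SideL SCA I3,
  Axis {I1,I2}, Axis {I1,I3}, Axis {I2,I3}]"

lemma spP': "sp_points = set Plist"
proof (rule set_eqI)
  fix x show "x \<in> sp_points \<longleftrightarrow> x \<in> set Plist"
  proof (cases x)
    case (V v i) then show ?thesis by (cases v; cases i) (simp_all add: sp_points_def Plist_def)
  next
    case (X s p) then show ?thesis by (cases s) (auto simp: sp_points_def Plist_def card2)
  qed (simp_all add: sp_points_def Plist_def)
qed

lemma spL': "sp_lines = set Llist"
proof (rule set_eqI)
  fix x show "x \<in> sp_lines \<longleftrightarrow> x \<in> set Llist"
  proof (cases x)
    case (Through v) then show ?thesis by (cases v) (simp_all add: sp_lines_def Llist_def)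
  next
    case (SideL s i) then show ?thesis by (cases s; cases i) (simp_all add: sp_lines_def Llist_def)
  next
    case (Axis p) then show ?thesis by (auto simp: sp_lines_def Llist_def card2)
  qed
qed

fun xi :: "idx \<Rightarrow> nat" where "xi I1 = 1" | "xi I2 = 2" | "xi I3 = 3"
fun yv :: "vtx \<Rightarrow> nat" where "yv VA = 4" | "yv VB = 5" | "yv VC = 6"
fun opp :: "side \<Rightarrow> vtx" where "opp SAB = VC" | "opp SBC = VA" | "opp SCA = VB"

fun fp :: "sp_point \<Rightarrow> nat set" where
  "fp PtO = {0,4,5,6}"
| "fp (V v i) = {0, xi i} \<union> ({4,5,6} - {yv v})"
| "fp (X s p) = insert 0 (insert (yv (opp s)) (xi ` p))"
| "fp PtZ = {0,1,2,3}"

fun gl :: "sp_line \<Rightarrow> nat set" where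
  "gl (Through v) = insert 0 ({4,5,6} - {yv v})"
| "gl (SideL s i) = {0, xi i, yv (opp s)}"
| "gl (Axis p) = insert 0 (xi ` p)"

lemma bij_list: "distinct (map f xs) \<Longrightarrow> set (map f xs) = B \<Longrightarrow> bij_betw f (set xs) B"
  by (simp add: bij_betw_def distinct_map)

theorem lemma4p4:
  shows "inc_isomorphic sp_points sp_lines sp_inc S_points S_lines S_inc"
  unfolding inc_isomorphic_def spP' spL'
proof (intro exI conjI)
  show "bij_betw fp (set Plist) S_points"
    apply (rule bij_list)
     apply (unfold Plist_def, code_simp)
    apply (unfold SP Plist_def, code_simp)
    done
  show "bij_betw gl (set Llist) S_lines"
    apply (rule bij_list)
     apply (unfold Llist_def, code_simp)
    apply (unfold SL Llist_def, code_simp)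
    done
  show "\<forall>p\<in>set Plist. \<forall>l\<in>set Llist. sp_inc p l = S_inc (fp p) (gl l)"
    unfolding Plist_def Llist_def S_inc_def by code_simp
qed
end
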